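(* (Construction of real regular cyclic sequences.) Let $a_nx^n+\dots+a_1x+a_0$ be a polynomial whose coefficients $a_0,\dots,a_n$ are all strictly positive integers, and set $$p(x)=(x+1)(a_nx^n+\dots+a_0)=b_{n+1}x^{n+1}+b_nx^n+\dots+b_1x+b_0,$$ so $b_{n+1}=a_n$, $b_k=a_k+a_{k-1}$ for $1\le k\le n$, $b_0=a_0$. Let $y$ be any real root of $p$ and $N=2\sum_k a_k$. Then it is always possible to choose a cyclic sequence of increments $(y_1,\dots,y_N)$ (indices mod $N$) taken from $\{1,y,y^2,\dots,y^{n+1}\}$ in which each $y^k$ occurs exactly $b_k$ times and any two cyclically adjacent increments are powers of $y$ whose exponents differ by exactly one; and for any such choice and any $x_0\in\mathbb{C}$, the sequence defined by $x_\ell-x_{\ell-1}=y_\ell$ ($\ell=1,\dots,N$) satisfies $x_N=x_0$ and is a real regular cyclic sequence on the cyclic graph of order $N$ with $\gamma=2(1+y^2)/(1-y)^2$. Conversely, up to replacing $(x_k)$ by $(\lambda x_k+\mu)$ ($\lambda\in\mathbb{C}\setminus\{0\},\mu\in\mathbb{C}$) and cyclic permutation, every non-constant real regular cyclic sequence with $\gamma\ne 1,2$ arises by this construction. The regular cyclic sequences with $\gamma=2$ are exactly those made up of connected (cyclic) segments of length $\ge 2$ on each of which the sequence is constant; the non-constant real regular cyclic sequences with $\gamma=1$ are exactly those equivalent under normalization to $(0,1,0,1,\dots,0,1)$.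
   Context: The cyclic graph of order $N\ge 3$ has vertices $0,1,\dots,N-1$ with $k\sim k\pm1 \pmod N$. A regular cyclic sequence is $(x_0,\dots,x_{N-1})\in\mathbb{C}^N$, with indices taken mod $N$ (so $x_N=x_0$), satisfying for every $k$ and a fixed real constant $\gamma$: $$\frac{\gamma}{2}(x_{k-1}+x_{k+1}-2x_k)^2=(x_{k-1}-x_k)^2+(x_{k+1}-x_k)^2 .$$ Normalization means replacing $x_k$ by $\lambda x_k+\mu$ with $\lambda\in\mathbb{C}\setminus\{0\}$, $\mu\in\mathbb{C}$ (this preserves the equations). A regular cyclic sequence is real if under some normalization all its terms are real. *)

theory Defs
  imports Complex_Main "HOL-Library.Disjoint_Sets"
begin

text \<open>A sequence x_0,...,x_{N-1} is modelled as x :: nat => complex, only the values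
  at indices k < N matter; neighbours are taken mod N.\<close>

definition regular_cyclic :: "nat \<Rightarrow> real \<Rightarrow> (nat \<Rightarrow> complex) \<Rightarrow> bool" where
  "regular_cyclic N \<gamma> x \<longleftrightarrow>
     (\<forall>k<N. complex_of_real \<gamma> / 2 * (x ((k + N - 1) mod N) + x ((k + 1) mod N) - 2 * x k)^2
            = (x ((k + N - 1) mod N) - x k)^2 + (x ((k + 1) mod N) - x k)^2)"

definition real_cyclic :: "nat \<Rightarrow> (nat \<Rightarrow> complex) \<Rightarrow> bool" where
  "real_cyclic N x \<longleftrightarrow> (\<exists>c \<mu>. c \<noteq> 0 \<and> (\<forall>k<N. c * x k + \<mu> \<in> \<real>))"

definition nonconstant_cyclic :: "nat \<Rightarrow> (nat \<Rightarrow> complex) \<Rightarrow> bool" where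
  "nonconstant_cyclic N x \<longleftrightarrow> (\<exists>i<N. \<exists>j<N. x i \<noteq> x j)"

definition coeff_b :: "(nat \<Rightarrow> nat) \<Rightarrow> nat \<Rightarrow> nat \<Rightarrow> nat" where
  "coeff_b a n k =
     (if k = 0 then a 0
      else if k \<le> n then a k + a (k - 1)
      else if k = n + 1 then a n else 0)"

text \<open>Admissible exponent sequence: increment y_l = y^(e l) for l = 1..N; y^k occurs
  exactly b_k times (k = 0..n+1); cyclically adjacent exponents differ by exactly one.\<close>
definition admissible_exps :: "(nat \<Rightarrow> nat) \<Rightarrow> nat \<Rightarrow> nat \<Rightarrow> (nat \<Rightarrow> nat) \<Rightarrow> bool" where
  "admissible_exps a n N e \<longleftrightarrow>
     (\<forall>l\<in>{1..N}. e l \<le> n + 1) \<and>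
     (\<forall>k\<le>n + 1. card {l\<in>{1..N}. e l = k} = coeff_b a n k) \<and>
     (\<forall>l\<in>{1..N}. \<bar>int (e l) - int (e (if l = N then 1 else Suc l))\<bar> = 1)"

definition constructed_seq :: "complex \<Rightarrow> real \<Rightarrow> (nat \<Rightarrow> nat) \<Rightarrow> nat \<Rightarrow> complex" where
  "constructed_seq x0 y e l = x0 + (\<Sum>j\<in>{1..l}. complex_of_real (y ^ e j))"

definition cyc_arc :: "nat \<Rightarrow> nat \<Rightarrow> nat \<Rightarrow> nat set" where
  "cyc_arc N s L = {(s + i) mod N | i. i < L}"

definition constant_segments :: "nat \<Rightarrow> (nat \<Rightarrow> complex) \<Rightarrow> bool" where
  "constant_segments N x \<longleftrightarrow>
     (\<exists>P. partition_on {..<N} P \<and>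
          (\<forall>A\<in>P. (\<exists>s L. s < N \<and> 2 \<le> L \<and> L \<le> N \<and> A = cyc_arc N s L) \<and>
                   (\<forall>i\<in>A. \<forall>j\<in>A. x i = x j)))"

end

theory Submission
  imports Defs
begin


definition nxt :: "nat \<Rightarrow> nat \<Rightarrow> nat" where "nxt N l = (if l = N then 1 else Suc l)"

lemma coeff_b_sum:
  fixes y :: real
  shows "(\<Sum>k\<le>Suc n. real (coeff_b a n k) * y^k) = (y+1) * (\<Sum>k\<le>n. real (a k) * y^k)"
proof -
  have h: "real (coeff_b a n k) * y^k = (if k \<le> n then real (a k) else 0) * y^k + (if k = 0 then 0 else real (a (k-1))) * y^k"
    if "k \<le> Suc n" for k
    using that by (cases "k = Suc n") (auto simp: coeff_b_def distrib_right)
  have "(\<Sum>k\<le>Suc n. real (coeff_b a n k) * y^k) = (\<Sum>k\<le>Suc n. (if k \<le> n then real (a k) else 0) * y^k) + (\<Sum>k\<le>Suc n. (if k = 0 then 0 else real (a (k-1))) * y^k)"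
    by (simp add: h sum.distrib[symmetric])
  also have "(\<Sum>k\<le>Suc n. (if k \<le> n then real (a k) else 0) * y^k) = (\<Sum>k\<le>n. real (a k) * y^k)"
    by (simp add: sum.atMost_Suc)
  also have "(\<Sum>k\<le>Suc n. (if k = 0 then 0 else real (a (k-1))) * y^k) = (\<Sum>k\<le>n. real (a k) * y^(Suc k))"
    by (subst sum.atMost_Suc_shift) simp
  finally show ?thesis by (simp add: sum_distrib_left distrib_right mult_ac sum.distrib)
qed

lemma adm_sum:
  fixes y :: real
  assumes "admissible_exps a n N e"
  shows "(\<Sum>l\<in>{1..N}. y ^ e l) = (\<Sum>k\<le>Suc n. real (coeff_b a n k) * y^k)"
proof -
  have "(\<Sum>l\<in>{1..N}. y ^ e l) = (\<Sum>k\<le>Suc n. \<Sum>l\<in>{l\<in>{1..N}. e l = k}. y ^ e l)"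
    using assms unfolding admissible_exps_def
    by (intro sum.group[symmetric]) auto
  also have "\<dots> = (\<Sum>k\<le>Suc n. real (coeff_b a n k) * y^k)"
  proof (rule sum.cong)
    fix k assume k: "k \<in> {..Suc n}"
    have "(\<Sum>l\<in>{l\<in>{1..N}. e l = k}. y ^ e l) = (\<Sum>l\<in>{l\<in>{1..N}. e l = k}. y ^ k)"
      by (rule sum.cong) auto
    also have "\<dots> = real (card {l\<in>{1..N}. e l = k}) * y ^ k" by simp
    also have "card {l\<in>{1..N}. e l = k} = coeff_b a n k"
      using assms k unfolding admissible_exps_def by auto
    finally show "(\<Sum>l\<in>{l\<in>{1..N}. e l = k}. y ^ e l) = real (coeff_b a n k) * y^k" .
  qed simp
  finally show ?thesis .
qed

lemma adm_N:
  assumes "admissible_exps a n N e"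
  shows "N = 2 * (\<Sum>k\<le>n. a k)"
proof -
  have "real N = (\<Sum>l\<in>{1..N}. (1::real) ^ e l)" by simp
  also have "\<dots> = 2 * (\<Sum>k\<le>n. real (a k))"
    using adm_sum[OF assms, of 1] coeff_b_sum[of a n 1] by simp
  finally have "real N = real (2 * (\<Sum>k\<le>n. a k))" by simp
  then show ?thesis by (simp only: of_nat_eq_iff)
qed

lemma cs_Suc: "constructed_seq x0 y e (Suc l) = constructed_seq x0 y e l + complex_of_real (y ^ e (Suc l))"
  by (simp add: constructed_seq_def)

lemma cs_real: "constructed_seq x0 y e l = x0 + complex_of_real (\<Sum>j\<in>{1..l}. y ^ e j)"
  by (simp add: constructed_seq_def)

lemma part1_seq:
  fixes y :: real
  assumes pos: "\<forall>k\<le>n. 0 < a k" and root: "(y + 1) * (\<Sum>k\<le>n. real (a k) * y ^ k) = 0"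
    and adm: "admissible_exps a n N e"
  shows "constructed_seq x0 y e N = constructed_seq x0 y e 0 \<and>
         regular_cyclic N (2 * (1 + y^2) / (1 - y)^2) (constructed_seq x0 y e) \<and>
         real_cyclic N (constructed_seq x0 y e)"
proof -
  define X where "X = constructed_seq x0 y e"
  define \<gamma> where "\<gamma> = 2 * (1 + y^2) / (1 - y)^2"
  have y1: "y \<noteq> 1"
  proof
    assume "y = 1"
    with root have "(\<Sum>k\<le>n. real (a k)) = 0" by simp
    moreover have "(\<Sum>k\<le>n. real (a k)) > 0"
      using pos by (intro sum_pos) auto
    ultimately show False by simp
  qed
  have closed: "(\<Sum>l\<in>{1..N}. y ^ e l) = 0"
    using adm_sum[OF adm, of y] coeff_b_sum[of a n y] root by simp
  have XN: "X N = X 0" unfolding X_def cs_real closed by simp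
  have "a 0 \<le> sum a {..n}" by (rule member_le_sum) auto
  hence N1: "1 \<le> N" using adm_N[OF adm] pos by auto
  have adjs: "\<bar>int (e l) - int (e (nxt N l))\<bar> = 1" if "l \<in> {1..N}" for l
    using adm that unfolding admissible_exps_def nxt_def by auto
  have key: "complex_of_real \<gamma> / 2 * ((- complex_of_real (y ^ e p)) + complex_of_real (y ^ e (nxt N p)))^2
      = (- complex_of_real (y ^ e p))^2 + (complex_of_real (y ^ e (nxt N p)))^2" if p: "p \<in> {1..N}" for p
  proof -
    define T where "T = y ^ e p"
    define U where "U = y ^ e (nxt N p)"
    have g: "\<gamma> * (1 - y)^2 = 2 * (1 + y^2)" using y1 by (simp add: \<gamma>_def)
    have "e (nxt N p) = Suc (e p) \<or> e p = Suc (e (nxt N p))" using adjs[OF p] by arith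
    hence "U = T * y \<or> T = U * y"
      unfolding T_def U_def by (auto simp: power_Suc2)
    hence r: "\<gamma> / 2 * (U - T)^2 = T^2 + U^2"
    proof
      assume u: "U = T * y"
      have "(U - T)^2 = T^2 * (1-y)^2" unfolding u by (simp add: power2_eq_square algebra_simps)
      hence "\<gamma> / 2 * (U - T)^2 = T^2 * (\<gamma> * (1-y)^2) / 2" by simp
      also have "\<dots> = T^2 + U^2" unfolding g u by (simp add: power2_eq_square algebra_simps)
      finally show ?thesis .
    next
      assume u: "T = U * y"
      have "(U - T)^2 = U^2 * (1-y)^2" unfolding u by (simp add: power2_eq_square algebra_simps)
      hence "\<gamma> / 2 * (U - T)^2 = U^2 * (\<gamma> * (1-y)^2) / 2" by simp
      also have "\<dots> = T^2 + U^2" unfolding g u by (simp add: power2_eq_square algebra_simps)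
      finally show ?thesis .
    qed
    have "complex_of_real (\<gamma> / 2 * (U - T)^2) = complex_of_real (T^2 + U^2)" using r by simp
    then show ?thesis unfolding T_def[symmetric] U_def[symmetric] by (simp add: algebra_simps)
  qed
  have reg: "regular_cyclic N \<gamma> X"
    unfolding regular_cyclic_def
  proof (intro allI impI)
    fix k assume k: "k < N"
    define p where "p = (if k = 0 then N else k)"
    have p: "p \<in> {1..N}" and np: "nxt N p = Suc k" using k N1 by (auto simp: p_def nxt_def)
    have L: "X ((k + N - 1) mod N) - X k = - complex_of_real (y ^ e p)"
    proof (cases "k = 0")
      case True
      have "(k + N - 1) mod N = N - 1" using True N1 by simp
      moreover have "X N = X (N - 1) + complex_of_real (y ^ e N)" using N1 cs_Suc[of x0 y e "N-1"] by (simp add: X_def)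
      ultimately show ?thesis using True XN by (simp add: p_def)
    next
      case False
      have "(k + N - 1) mod N = k - 1" using False k by (simp add: mod_if)
      moreover have "X k = X (k - 1) + complex_of_real (y ^ e k)" using False cs_Suc[of x0 y e "k-1"] by (simp add: X_def)
      ultimately show ?thesis using False by (simp add: p_def)
    qed
    have R: "X ((k + 1) mod N) - X k = complex_of_real (y ^ e (nxt N p))"
    proof (cases "Suc k = N")
      case True
      then show ?thesis using XN cs_Suc[of x0 y e k] np by (simp add: X_def)
    next
      case False
      then show ?thesis using k cs_Suc[of x0 y e k] np by (simp add: X_def)
    qed
    have e1: "X ((k + N - 1) mod N) + X ((k + 1) mod N) - 2 * X k = (- complex_of_real (y ^ e p)) + complex_of_real (y ^ e (nxt N p))"
      using L R by (simp add: algebra_simps)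
    show "complex_of_real \<gamma> / 2 * (X ((k + N - 1) mod N) + X ((k + 1) mod N) - 2 * X k)\<^sup>2 =
          (X ((k + N - 1) mod N) - X k)\<^sup>2 + (X ((k + 1) mod N) - X k)\<^sup>2"
      unfolding e1 L R using key[OF p] .
  qed
  have rc: "real_cyclic N X"
    unfolding real_cyclic_def
    by (rule exI[of _ 1], rule exI[of _ "-x0"]) (simp add: X_def cs_real)
  show ?thesis using XN reg rc by (simp add: X_def \<gamma>_def)
qed



fun walkd :: "(nat \<Rightarrow> nat) \<Rightarrow> nat \<Rightarrow> nat \<Rightarrow> nat list" where
  "walkd a k 0 = []"
| "walkd a k (Suc d) = concat (replicate (a k - 1) [k, Suc k]) @ [k] @ walkd a (Suc k) d @ [Suc k]"

definition adj :: "nat \<Rightarrow> nat \<Rightarrow> bool" where "adj u v \<longleftrightarrow> \<bar>int u - int v\<bar> = 1"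

lemma count_concat_rep: "count_list (concat (replicate m xs)) x = m * count_list xs x"
  by (induction m) auto

lemma rep_props: "successively adj (concat (replicate m [k, Suc k]) @ [k]) \<and> hd (concat (replicate m [k, Suc k]) @ [k]) = k"
  by (induction m) (auto simp: adj_def successively_Cons)

lemma set_rep: "set (concat (replicate m [k, Suc k])) \<subseteq> {k, Suc k}"
  by (induction m) auto

lemma walk_nil: "walkd a k d = [] \<longleftrightarrow> d = 0"
  by (cases d) auto

lemma walk_hd_last: "d > 0 \<Longrightarrow> hd (walkd a k d) = k \<and> last (walkd a k d) = Suc k"
  using rep_props[of "a k - 1" k] by (cases d) (auto simp: hd_append)

lemma walk_succ: "successively adj (walkd a k d)"
proof (induction d arbitrary: k)
  case 0 then show ?case by simp
next
  case (Suc d)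
  have R: "successively adj (concat (replicate (a k - 1) [k, Suc k]) @ [k])"
    using rep_props by blast
  show ?case
  proof (cases d)
    case 0
    then show ?thesis using R by (simp add: successively_append_iff adj_def)
  next
    case (Suc d')
    have W: "walkd a (Suc k) d \<noteq> []" "hd (walkd a (Suc k) d) = Suc k" "last (walkd a (Suc k) d) = Suc (Suc k)"
      using walk_hd_last[of d a "Suc k"] walk_nil[of a "Suc k" d] Suc by auto
    define R where "R = concat (replicate (a k - 1) [k, Suc k]) @ [k]"
    define W' where "W' = walkd a (Suc k) d @ [Suc k]"
    have A: "successively adj R" using R unfolding R_def .
    have B: "successively adj W'" using W Suc.IH[of "Suc k"] unfolding W'_def
      by (auto simp: successively_append_iff adj_def)
    have C: "adj (last R) (hd W')" using W unfolding R_def W'_def by (simp add: adj_def)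
    have "walkd a k (Suc d) = R @ W'" by (simp add: R_def W'_def)
    also have "successively adj \<dots>"
      using successively_append_iff[of adj R W'] A B C by blast
    finally show ?thesis .
  qed
qed

lemma walk_set: "set (walkd a k d) \<subseteq> {k..k+d}"
proof (induction d arbitrary: k)
  case 0 then show ?case by simp
next
  case (Suc d)
  then show ?case using set_rep[of "a k - 1" k] by fastforce
qed

lemma walk_len:
  assumes "\<forall>j. k \<le> j \<and> j < k + d \<longrightarrow> 0 < a j"
  shows "length (walkd a k d) = 2 * (\<Sum>j\<in>{k..<k+d}. a j)"
  using assms
proof (induction d arbitrary: k)
  case 0 then show ?case by simp
next
  case (Suc d)
  have ak: "0 < a k" using Suc.prems by auto
  have IH: "length (walkd a (Suc k) d) = 2 * (\<Sum>j\<in>{Suc k..<Suc k+d}. a j)"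
    using Suc.prems by (intro Suc.IH) auto
  have "(\<Sum>j\<in>{k..<k+Suc d}. a j) = a k + (\<Sum>j\<in>{Suc k..<Suc k+d}. a j)"
    by (simp add: sum.atLeast_Suc_lessThan)
  then show ?case using IH ak by (simp add: length_concat sum_list_replicate)
qed

lemma walk_count:
  assumes "\<forall>j. k \<le> j \<and> j < k + d \<longrightarrow> 0 < a j"
  shows "count_list (walkd a k d) j = (if k \<le> j \<and> j < k+d then a j else 0) + (if k < j \<and> j \<le> k+d then a (j-1) else 0)"
  using assms
proof (induction d arbitrary: k)
  case 0 then show ?case by simp
next
  case (Suc d)
  have ak: "0 < a k" using Suc.prems by auto
  have IH: "count_list (walkd a (Suc k) d) j = (if Suc k \<le> j \<and> j < Suc k+d then a j else 0) + (if Suc k < j \<and> j \<le> Suc k+d then a (j-1) else 0)"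
    using Suc.prems by (intro Suc.IH) auto
  show ?case using IH ak by (auto simp: count_concat_rep)
qed

lemma exists_adm:
  assumes pos: "\<forall>k\<le>n. 0 < a k"
  shows "\<exists>e. admissible_exps a n (2 * (\<Sum>k\<le>n. a k)) e"
proof -
  define W where "W = walkd a 0 (Suc n)"
  define N where "N = 2 * (\<Sum>k\<le>n. a k)"
  have pos': "\<forall>j. 0 \<le> j \<and> j < 0 + Suc n \<longrightarrow> 0 < a j" using pos by auto
  have lenW: "length W = N"
    using walk_len[OF pos'] unfolding W_def N_def by (simp add: atLeast0LessThan lessThan_Suc_atMost)
  have hl: "hd W = 0" "last W = 1" and Wne: "W \<noteq> []"
    using walk_hd_last[of "Suc n" a 0] walk_nil[of a 0 "Suc n"] unfolding W_def by auto
  have succ: "successively adj W" unfolding W_def by (rule walk_succ)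
  have setW: "set W \<subseteq> {0..Suc n}" unfolding W_def using walk_set[of a 0 "Suc n"] by simp
  have cnt: "count_list W j = coeff_b a n j" for j
    unfolding W_def using walk_count[OF pos', of j] by (auto simp: coeff_b_def)
  define e where "e l = W ! (l - 1)" for l
  have "admissible_exps a n N e"
    unfolding admissible_exps_def
  proof (intro conjI ballI allI impI)
    fix l assume l: "l \<in> {1..N}"
    then have "l - 1 < length W" using lenW by auto
    hence "W ! (l - 1) \<in> set W" by (rule nth_mem)
    then show "e l \<le> n + 1" using setW unfolding e_def by auto
  next
    fix k assume "k \<le> n + 1"
    have "{l\<in>{1..N}. e l = k} = Suc ` {i. i < length W \<and> k = W ! i}"
    proof (rule set_eqI, rule iffI)
      fix l assume "l \<in> {l\<in>{1..N}. e l = k}"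
      then have l: "1 \<le> l" "l \<le> N" "W ! (l - 1) = k" by (auto simp: e_def)
      then have "l = Suc (l - 1)" "l - 1 < length W" using lenW by auto
      then show "l \<in> Suc ` {i. i < length W \<and> k = W ! i}" using l(3)
        by (metis (mono_tags, lifting) image_eqI mem_Collect_eq)
    next
      fix l assume "l \<in> Suc ` {i. i < length W \<and> k = W ! i}"
      then obtain i where "l = Suc i" "i < length W" "k = W ! i" by blast
      then show "l \<in> {l\<in>{1..N}. e l = k}" using lenW by (simp add: e_def)
    qed
    hence "card {l\<in>{1..N}. e l = k} = card {i. i < length W \<and> k = W ! i}"
      by (simp add: card_image)
    also have "\<dots> = count_list W k"
      by (simp add: count_list_eq_length_filter length_filter_conv_card)
    finally show "card {l\<in>{1..N}. e l = k} = coeff_b a n k" using cnt by simp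
  next
    fix l assume l: "l \<in> {1..N}"
    show "\<bar>int (e l) - int (e (if l = N then 1 else Suc l))\<bar> = 1"
    proof (cases "l = N")
      case True
      have "e N = last W" using lenW Wne l by (simp add: e_def last_conv_nth)
      moreover have "e 1 = hd W" using Wne by (simp add: e_def hd_conv_nth)
      ultimately show ?thesis using True hl by simp
    next
      case False
      then have "Suc (l - 1) < length W" using l lenW by auto
      from successively_nth[OF succ this] show ?thesis using False l
        by (simp add: e_def adj_def)
    qed
  qed
  then show ?thesis unfolding N_def by blast
qed



lemma sum_nxt:
  assumes "1 \<le> N"
  shows "(\<Sum>l\<in>{1..N}. f (nxt N l)) = (\<Sum>l\<in>{1..N}. (f l :: 'a::comm_monoid_add))"
  by (rule sum.reindex_bij_witness[of _ "\<lambda>m. if m = 1 then N else m - 1" "nxt N"])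
     (use assms in \<open>auto simp: nxt_def\<close>)

definition upc where "upc N e k = card {l\<in>{1..N}. e l = k \<and> e (nxt N l) = Suc k}"
definition dnc where "dnc N e k = card {l\<in>{1..N}. e l = Suc k \<and> e (nxt N l) = k}"

lemma sum_ind: "finite A \<Longrightarrow> (\<Sum>x\<in>A. if P x then 1 else 0 :: int) = int (card {x\<in>A. P x})"
  by (simp add: sum.inter_filter[symmetric])

lemma up_eq_down:
  assumes N: "1 \<le> N" and adjs: "\<forall>l\<in>{1..N}. \<bar>int (e l) - int (e (nxt N l))\<bar> = 1"
  shows "upc N e k = dnc N e k"
proof -
  define f where "f l = (if e l \<le> k then 1 else 0 :: int)" for l
  have "(\<Sum>l\<in>{1..N}. f l - f (nxt N l)) = 0" using sum_nxt[OF N, of f] by (simp add: sum_subtractf)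
  moreover have "(\<Sum>l\<in>{1..N}. f l - f (nxt N l)) = (\<Sum>l\<in>{1..N}. (if e l = k \<and> e (nxt N l) = Suc k then 1 else 0) - (if e l = Suc k \<and> e (nxt N l) = k then 1 else 0))"
  proof (rule sum.cong)
    fix l assume "l \<in> {1..N}"
    then have "\<bar>int (e l) - int (e (nxt N l))\<bar> = 1" using adjs by auto
    then show "f l - f (nxt N l) = (if e l = k \<and> e (nxt N l) = Suc k then 1 else 0) - (if e l = Suc k \<and> e (nxt N l) = k then 1 else 0)"
      unfolding f_def by auto
  qed simp
  ultimately have "int (upc N e k) - int (dnc N e k) = 0"
    by (simp add: sum_subtractf sum_ind upc_def dnc_def)
  then show ?thesis by simp
qed

lemma visits:
  assumes N: "1 \<le> N" and adjs: "\<forall>l\<in>{1..N}. \<bar>int (e l) - int (e (nxt N l))\<bar> = 1"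
  shows "card {l\<in>{1..N}. e l = k} = upc N e k + (if k = 0 then 0 else upc N e (k - 1))"
proof (cases k)
  case 0
  have "{l\<in>{1..N}. e l = k} = {l\<in>{1..N}. e l = k \<and> e (nxt N l) = Suc k}"
    using adjs 0 by force
  then show ?thesis using 0 by (simp add: upc_def)
next
  case (Suc j)
  have "{l\<in>{1..N}. e l = k} = {l\<in>{1..N}. e l = k \<and> e (nxt N l) = Suc k} \<union> {l\<in>{1..N}. e l = Suc j \<and> e (nxt N l) = j}"
    using adjs Suc by force
  moreover have "card (\<dots>) = upc N e k + dnc N e j"
    unfolding upc_def dnc_def using Suc by (subst card_Un_disjoint) auto
  ultimately show ?thesis using up_eq_down[OF N adjs, of j] Suc by simp
qed

lemma upc_pos:
  assumes N: "1 \<le> N" and adjs: "\<forall>l\<in>{1..N}. \<bar>int (e l) - int (e (nxt N l))\<bar> = 1"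
    and l0: "l0 \<in> {1..N}" "e l0 \<le> k" and l1: "l1 \<in> {1..N}" "k < e l1"
  shows "0 < upc N e k"
proof (rule ccontr)
  assume "\<not> 0 < upc N e k"
  then have u: "upc N e k = 0" by simp
  then have d: "dnc N e k = 0" using up_eq_down[OF N adjs] by simp
  have E1: "{l\<in>{1..N}. e l = k \<and> e (nxt N l) = Suc k} = {}" using u unfolding upc_def by simp
  have E2: "{l\<in>{1..N}. e l = Suc k \<and> e (nxt N l) = k} = {}" using d unfolding dnc_def by simp
  have step: "(e l \<le> k) = (e (nxt N l) \<le> k)" if "l \<in> {1..N}" for l
  proof -
    have "\<bar>int (e l) - int (e (nxt N l))\<bar> = 1" using adjs that by auto
    moreover have "l \<notin> {l\<in>{1..N}. e l = k \<and> e (nxt N l) = Suc k}" "l \<notin> {l\<in>{1..N}. e l = Suc k \<and> e (nxt N l) = k}"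
      using E1 E2 by auto
    ultimately show ?thesis using that by auto
  qed
  have all: "1 \<le> l \<longrightarrow> l \<le> N \<longrightarrow> (e l \<le> k) = (e 1 \<le> k)" for l
  proof (induction l)
    case 0 then show ?case by simp
  next
    case (Suc l)
    show ?case
    proof (cases "l = 0")
      case True then show ?thesis by simp
    next
      case False
      show ?thesis
      proof (intro impI)
        assume "Suc l \<le> N"
        then have "nxt N l = Suc l" "l \<in> {1..N}" using False by (auto simp: nxt_def)
        then show "(e (Suc l) \<le> k) = (e 1 \<le> k)" using step[of l] Suc.IH False \<open>Suc l \<le> N\<close> by auto
      qed
    qed
  qed
  show False using all[of l0] all[of l1] l0 l1 by auto
qed

lemma powi_inj:
  fixes y :: real
  assumes "y \<noteq> 0" "\<bar>y\<bar> \<noteq> 1" "y powi a = y powi b"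
  shows "a = b"
proof -
  have eq: "\<bar>y\<bar> powi a = \<bar>y\<bar> powi b" using assms(3) by (metis power_int_abs)
  show ?thesis
  proof (rule ccontr)
    assume ne: "a \<noteq> b"
    show False
    proof (cases "\<bar>y\<bar> > 1")
      case True
      then show False using ne eq power_int_strict_increasing[OF _ True, of a b] power_int_strict_increasing[OF _ True, of b a]
        by (cases "a < b") auto
    next
      case False
      then have "0 < \<bar>y\<bar>" "\<bar>y\<bar> < 1" using assms by auto
      then show False using ne eq power_int_strict_decreasing[of a b "\<bar>y\<bar>"] power_int_strict_decreasing[of b a "\<bar>y\<bar>"]
        by (cases "a < b") auto
    qed
  qed
qed



lemma mod_pred: fixes l N :: nat
  assumes "1 \<le> l" "0 < N" shows "(l - 1) mod N = (l mod N + N - 1) mod N"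
proof -
  obtain M where M: "N = Suc M" using assms(2) by (cases N) auto
  obtain L where L: "l = Suc L" using assms(1) by (cases l) auto
  have "(Suc L mod Suc M + M) mod Suc M = (Suc L + M) mod Suc M" by (simp add: mod_add_left_eq)
  also have "Suc L + M = L + Suc M" by simp
  also have "(L + Suc M) mod Suc M = L mod Suc M" by (simp only: mod_add_self2)
  finally show ?thesis unfolding M L by simp
qed

lemma quad_split:
  fixes \<gamma> u v y d :: real
  assumes a: "\<gamma> \<noteq> 2" and h: "\<gamma>/2 * (v - u)^2 = u^2 + v^2" and hy: "\<gamma>/2 * (y*d - d)^2 = d^2 + (y*d)^2" and d: "d \<noteq> 0"
  shows "v = y * u \<or> u = y * v"
proof -
  define \<alpha> where "\<alpha> = \<gamma>/2 - 1"
  have h': "\<alpha> * u^2 - \<gamma> * u * v + \<alpha> * v^2 = 0" using h unfolding \<alpha>_def by (simp add: power2_eq_square algebra_simps)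
  have hy': "d^2 * (\<alpha> - \<gamma> * y + \<alpha> * y^2) = 0" using hy unfolding \<alpha>_def by (simp add: power2_eq_square algebra_simps)
  have "\<alpha> - \<gamma> * y + \<alpha> * y^2 = 0" using hy' d by simp
  hence hy'': "\<alpha> * (1 + y^2) = \<gamma> * y" by (simp add: algebra_simps)
  have "\<alpha> * ((v - y * u) * (y * v - u)) = y * (\<alpha> * u^2 - \<gamma> * u * v + \<alpha> * v^2) + (\<gamma> * y - \<alpha> * (1 + y^2)) * u * v"
    by (simp add: power2_eq_square algebra_simps)
  also have "\<dots> = 0" using h' hy'' by simp
  finally have "(v - y * u) * (y * v - u) = 0" using a unfolding \<alpha>_def by simp
  then show ?thesis by auto
qed

lemma part2:
  fixes x :: "nat \<Rightarrow> complex" and \<gamma> :: real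
  assumes N3: "3 \<le> N" and g1: "\<gamma> \<noteq> 1" and g2: "\<gamma> \<noteq> 2"
    and reg: "regular_cyclic N \<gamma> x" and rc: "real_cyclic N x" and nc: "nonconstant_cyclic N x"
  shows "\<exists>(n::nat) (a::nat \<Rightarrow> nat) (y::real) e (c::complex) (\<mu>::complex) s x0.
          (\<forall>k\<le>n. 0 < a k) \<and> (y + 1) * (\<Sum>k\<le>n. real (a k) * y ^ k) = 0 \<and>
          N = 2 * (\<Sum>k\<le>n. a k) \<and> \<gamma> = 2 * (1 + y^2) / (1 - y)^2 \<and>
          admissible_exps a n N e \<and> c \<noteq> 0 \<and> s < N \<and>
          (\<forall>k<N. c * x ((k + s) mod N) + \<mu> = constructed_seq x0 y e k)"
proof -
  obtain c0 \<mu>0 where c0: "c0 \<noteq> 0" and re: "\<forall>k<N. c0 * x k + \<mu>0 \<in> \<real>"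
    using rc unfolding real_cyclic_def by blast
  have N0: "0 < N" and N1: "1 \<le> N" using N3 by auto
  define z where "z k = Re (c0 * x (k mod N) + \<mu>0)" for k
  have zi: "complex_of_real (z i) = c0 * x i + \<mu>0" if "i < N" for i
  proof -
    have "i mod N = i" using that by simp
    moreover have "c0 * x i + \<mu>0 \<in> \<real>" using re that by blast
    ultimately show ?thesis unfolding z_def by (simp only: of_real_Re)
  qed
  have zmod: "z a = z b" if "a mod N = b mod N" for a b using that by (simp add: z_def)
  have regz: "\<gamma>/2 * (z i + z j - 2 * z k)^2 = (z i - z k)^2 + (z j - z k)^2"
    if k: "k < N" and ij: "i = (k + N - 1) mod N" "j = (k + 1) mod N" for i j k
  proof -
    have iN: "i < N" "j < N" using ij N0 by auto
    have r: "complex_of_real \<gamma> / 2 * (x i + x j - 2 * x k)^2 = (x i - x k)^2 + (x j - x k)^2"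
      using reg k unfolding regular_cyclic_def ij by blast
    have d1: "complex_of_real (z i - z k) = c0 * (x i - x k)" "complex_of_real (z j - z k) = c0 * (x j - x k)"
      "complex_of_real (z i + z j - 2 * z k) = c0 * (x i + x j - 2 * x k)"
      using zi[OF iN(1)] zi[OF iN(2)] zi[OF k] by (simp_all add: algebra_simps)
    have "complex_of_real (\<gamma>/2 * (z i + z j - 2 * z k)^2) = complex_of_real \<gamma> / 2 * (complex_of_real (z i + z j - 2 * z k))^2"
      by simp
    also have "\<dots> = c0^2 * (complex_of_real \<gamma> / 2 * (x i + x j - 2 * x k)^2)"
      unfolding d1 by (simp add: power_mult_distrib)
    also have "\<dots> = c0^2 * ((x i - x k)^2 + (x j - x k)^2)" using r by simp
    also have "\<dots> = (complex_of_real (z i - z k))^2 + (complex_of_real (z j - z k))^2"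
      unfolding d1 by (simp add: power_mult_distrib distrib_left)
    also have "\<dots> = complex_of_real ((z i - z k)^2 + (z j - z k)^2)" by simp
    finally show ?thesis by (simp only: of_real_eq_iff)
  qed
  define D where "D l = z l - z (l - 1)" for l
  have R: "\<gamma>/2 * (D (Suc l) - D l)^2 = (D l)^2 + (D (Suc l))^2" if l: "1 \<le> l" for l
  proof -
    define k where "k = l mod N"
    have k: "k < N" using N0 by (simp add: k_def)
    have "z l = z k" by (rule zmod) (simp add: k_def)
    moreover have "z (l - 1) = z ((k + N - 1) mod N)" by (rule zmod) (use mod_pred[OF l N0] in \<open>simp add: k_def\<close>)
    moreover have "z (Suc l) = z ((k + 1) mod N)" by (rule zmod) (simp add: k_def mod_Suc_eq)
    ultimately show ?thesis using regz[OF k refl refl] unfolding D_def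
      by (simp add: power2_eq_square algebra_simps)
  qed
  have Dsum: "(\<Sum>l\<in>{1..k}. D l) = z k - z 0" for k
    by (induction k) (simp_all add: D_def)
  have Dper: "D (l + N) = D l" if "1 \<le> l" for l
  proof -
    have "z (l + N) = z l" by (rule zmod) simp
    moreover have "l + N - 1 = (l - 1) + N" using that by simp
    hence "z (l + N - 1) = z (l - 1)" by (intro zmod) (simp only: mod_add_self2)
    ultimately show ?thesis using that by (simp add: D_def)
  qed
  have Dnz: "D l \<noteq> 0" if l: "1 \<le> l" for l
  proof
    assume D0: "D l = 0"
    have allz: "D (l + j) = 0" for j
    proof (induction j)
      case 0 then show ?case using D0 by simp
    next
      case (Suc j)
      have "\<gamma>/2 * (D (Suc (l + j)))^2 = (D (Suc (l + j)))^2"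
        using R[of "l + j"] l Suc.IH by simp
      hence "(\<gamma>/2 - 1) * (D (Suc (l + j)))^2 = 0" by (simp add: algebra_simps)
      hence "D (Suc (l + j)) = 0" using g2 by simp
      then show ?case by simp
    qed
    have zc: "z (l + j) = z l" for j
    proof (induction j)
      case 0 then show ?case by simp
    next
      case (Suc j)
      have "D (l + Suc j) = 0" by (rule allz)
      then show ?case using Suc.IH by (simp add: D_def)
    qed
    have zall: "z k = z l" if "k < N" for k
    proof -
      have z1: "z k = z (k + N * l)" by (rule zmod) simp
      have "1 * l \<le> N * l" using N1 by (rule mult_le_mono1)
      hence "l \<le> k + N * l" by linarith
      hence eq: "k + N * l = l + (k + N * l - l)" by (simp only: le_add_diff_inverse)
      have "z (k + N * l) = z l" by (subst eq) (rule zc)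
      then show ?thesis using z1 by simp
    qed
    have "x i = x j" if "i < N" "j < N" for i j
    proof -
      have "c0 * x i + \<mu>0 = c0 * x j + \<mu>0" using zi[OF that(1)] zi[OF that(2)] zall[OF that(1)] zall[OF that(2)] by simp
      then show ?thesis using c0 by simp
    qed
    then show False using nc unfolding nonconstant_cyclic_def by blast
  qed
  define y where "y = D 2 / D 1"
  have D1: "D 1 \<noteq> 0" using Dnz by simp
  have D2: "D 2 = y * D 1" using D1 by (simp add: y_def)
  have y0: "y \<noteq> 0" using Dnz[of 2] D1 by (simp add: y_def)
  have R1: "\<gamma>/2 * (y * D 1 - D 1)^2 = (D 1)^2 + (y * D 1)^2" using R[of 1] D2 by (simp add: numeral_2_eq_2)
  have yn1: "y \<noteq> 1" using R1 D1 by auto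
  have ym1: "y \<noteq> -1"
  proof
    assume "y = -1"
    then have "\<gamma>/2 * (4 * (D 1)^2) = 2 * (D 1)^2" using R1 by (simp add: power2_eq_square algebra_simps)
    then have "\<gamma> = 1" using D1 by simp
    then show False using g1 by simp
  qed
  have yabs: "\<bar>y\<bar> \<noteq> 1" using yn1 ym1 by (auto simp: abs_if)
  have gam: "\<gamma> = 2 * (1 + y^2) / (1 - y)^2"
  proof -
    have "(D 1)^2 * (\<gamma> / 2 * (y - 1)^2) = (D 1)^2 * (1 + y^2)"
      using R1 by (simp add: power2_eq_square algebra_simps)
    hence "\<gamma> / 2 * (y - 1)^2 = 1 + y^2" using D1 by simp
    hence "\<gamma> * (1 - y)^2 = 2 * (1 + y^2)" by (simp add: power2_eq_square algebra_simps)
    moreover have "(1 - y)^2 \<noteq> 0" using yn1 by simp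
    ultimately show ?thesis by (simp add: field_simps)
  qed
  have split: "D (Suc l) = y * D l \<or> D l = y * D (Suc l)" if "1 \<le> l" for l
    using quad_split[OF g2 R[OF that] R1 D1] .
  define E :: "nat \<Rightarrow> int" where "E = rec_nat 0 (\<lambda>l El. if l = 0 then 0 else El + (if D (Suc l) = y * D l then 1 else -1))"
  have E1: "E 1 = 0" by (simp add: E_def)
  have ESuc: "E (Suc l) = E l + (if D (Suc l) = y * D l then 1 else -1)" if "1 \<le> l" for l
    using that by (simp add: E_def)
  have DE: "D l = D 1 * y powi E l" if "1 \<le> l" for l
    using that
  proof (induction l)
    case 0 then show ?case by simp
  next
    case (Suc l)
    show ?case
    proof (cases "l = 0")
      case True then show ?thesis using E1 by simp
    next
      case False
      then have l: "1 \<le> l" by simp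
      note IH = Suc.IH[OF l]
      show ?thesis
      proof (cases "D (Suc l) = y * D l")
        case True
        have p: "y powi (E l + 1) = y powi E l * y" using y0 by (simp add: power_int_add)
        show ?thesis using True ESuc[OF l] IH p by simp
      next
        case False
        then have "D l = y * D (Suc l)" using split[OF l] by simp
        then have "D (Suc l) = D l / y" using y0 by simp
        then show ?thesis using ESuc[OF l] False IH y0 by (simp add: power_int_diff)
      qed
    qed
  qed
  have Estep: "\<bar>E (Suc l) - E l\<bar> = 1" if "1 \<le> l" for l
    using ESuc[OF that] by simp
  have EN: "E (Suc N) = E 1"
  proof -
    have a: "D (Suc N) = D 1" using Dper[of 1] by simp
    have b: "D (Suc N) = D 1 * y powi E (Suc N)" by (rule DE) simp
    have "y powi E (Suc N) = y powi E 1" using a b D1 E1 by simp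
    then show ?thesis using powi_inj[OF y0 yabs] by blast
  qed
  have Eadj: "\<bar>E l - E (nxt N l)\<bar> = 1" if "l \<in> {1..N}" for l
  proof (cases "l = N")
    case True then show ?thesis using Estep[of N] EN N1 by (simp add: nxt_def abs_minus_commute)
  next
    case False then show ?thesis using Estep[of l] that by (simp add: nxt_def abs_minus_commute)
  qed
  have nxtin: "nxt N l \<in> {1..N}" if "l \<in> {1..N}" for l using that by (auto simp: nxt_def)
  define m0 where "m0 = Min (E ` {1..N})"
  define M where "M = Max (E ` {1..N})"
  have fin: "finite (E ` {1..N})" "E ` {1..N} \<noteq> {}" using N1 by auto
  have m0le: "m0 \<le> E l" "E l \<le> M" if "l \<in> {1..N}" for l
    using that fin unfolding m0_def M_def by auto
  obtain l0 where l0: "l0 \<in> {1..N}" "E l0 = m0" using Min_in[OF fin] unfolding m0_def by auto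
  obtain l1 where l1: "l1 \<in> {1..N}" "E l1 = M" using Max_in[OF fin] unfolding M_def by auto
  have "E 2 \<noteq> E 1" using Estep[of 1] by (simp add: numeral_2_eq_2)
  moreover have "1 \<in> {1..N}" "2 \<in> {1..N}" using N3 by auto
  ultimately have Mm: "m0 < M" using m0le[of 1] m0le[of 2] by linarith
  define e where "e l = nat (E l - m0)" for l
  define n where "n = nat (M - m0) - 1"
  have Sn: "Suc n = nat (M - m0)" using Mm unfolding n_def by simp
  have eE: "int (e l) = E l - m0" if "l \<in> {1..N}" for l using m0le[OF that] by (simp add: e_def)
  have eadj: "\<forall>l\<in>{1..N}. \<bar>int (e l) - int (e (nxt N l))\<bar> = 1"
    using eE nxtin Eadj by simp
  have ele: "e l \<le> Suc n" if "l \<in> {1..N}" for l using m0le[OF that] Sn by (simp add: e_def)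
  define a where "a k = upc N e k" for k
  have upc_top: "upc N e (Suc n) = 0"
  proof -
    have "{l\<in>{1..N}. e l = Suc n \<and> e (nxt N l) = Suc (Suc n)} = {}"
      using ele nxtin by fastforce
    then show ?thesis by (simp add: upc_def)
  qed
  have adm: "admissible_exps a n N e"
    unfolding admissible_exps_def
  proof (intro conjI ballI allI impI)
    fix l assume "l \<in> {1..N}" then show "e l \<le> n + 1" using ele by simp
  next
    fix k assume k: "k \<le> n + 1"
    show "card {l\<in>{1..N}. e l = k} = coeff_b a n k"
    proof (cases "k = Suc n")
      case True then show ?thesis using visits[OF N1 eadj, of k] upc_top unfolding a_def coeff_b_def by auto
    next
      case False then show ?thesis using visits[OF N1 eadj, of k] k unfolding a_def coeff_b_def by auto
    qed
  next
    fix l assume "l \<in> {1..N}"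
    then show "\<bar>int (e l) - int (e (if l = N then 1 else Suc l))\<bar> = 1"
      using eadj unfolding nxt_def by auto
  qed
  have pos: "\<forall>k\<le>n. 0 < a k"
  proof (intro allI impI)
    fix k assume k: "k \<le> n"
    have "e l0 = 0" using l0 by (simp add: e_def)
    moreover have "e l1 = Suc n" using l1 Sn by (simp add: e_def)
    ultimately show "0 < a k" unfolding a_def using upc_pos[OF N1 eadj l0(1) _ l1(1)] k by simp
  qed
  define K where "K = D 1 * y powi m0"
  have K0: "K \<noteq> 0" using D1 y0 by (simp add: K_def)
  have DK: "D l = K * y ^ e l" if "l \<in> {1..N}" for l
  proof -
    have "E l = m0 + int (e l)" using eE[OF that] by simp
    then have "y powi E l = y powi m0 * y ^ e l" using y0 by (simp add: power_int_add)
    then show ?thesis using DE[of l] that by (simp add: K_def)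
  qed
  have zK: "z k = z 0 + K * (\<Sum>j\<in>{1..k}. y ^ e j)" if "k \<le> N" for k
  proof -
    have "(\<Sum>j\<in>{1..k}. D j) = (\<Sum>j\<in>{1..k}. K * y ^ e j)" using that by (intro sum.cong) (auto intro: DK)
    then show ?thesis using Dsum[of k] by (simp add: sum_distrib_left)
  qed
  have "z N = z 0" by (rule zmod) simp
  then have "K * (\<Sum>j\<in>{1..N}. y ^ e j) = 0" using zK[of N] by simp
  then have "(\<Sum>j\<in>{1..N}. y ^ e j) = 0" using K0 by simp
  then have root: "(y + 1) * (\<Sum>k\<le>n. real (a k) * y ^ k) = 0"
    using adm_sum[OF adm, of y] coeff_b_sum[of a n y] by simp
  define c where "c = c0 / complex_of_real K"
  define \<mu> where "\<mu> = \<mu>0 / complex_of_real K"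
  define x0 where "x0 = complex_of_real (z 0 / K)"
  have fin_eq: "c * x ((k + 0) mod N) + \<mu> = constructed_seq x0 y e k" if k: "k < N" for k
  proof -
    have "c * x ((k + 0) mod N) + \<mu> = (c0 * x k + \<mu>0) / complex_of_real K"
      using k by (simp add: c_def \<mu>_def add_divide_distrib)
    also have "\<dots> = complex_of_real (z k / K)" using zi[OF k] by simp
    also have "z k / K = z 0 / K + (\<Sum>j\<in>{1..k}. y ^ e j)" using zK[of k] k K0 by (simp add: field_simps)
    finally show ?thesis by (simp add: cs_real x0_def)
  qed
  have c_ne: "c \<noteq> 0" using c0 K0 by (simp add: c_def)
  show ?thesis
    using pos root adm_N[OF adm] gam adm c_ne N0 fin_eq
    by blast
qed



lemma eq1_iff:
  fixes p q r :: complex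
  shows "(complex_of_real 1 / 2 * (p + q - 2 * r)^2 = (p - r)^2 + (q - r)^2) \<longleftrightarrow> p = q"
proof -
  have d: "complex_of_real 1 / 2 * (p + q - 2 * r)^2 - ((p - r)^2 + (q - r)^2) = - ((p - q)^2 / 2)"
    by (simp add: power2_eq_square field_simps)
  have "(complex_of_real 1 / 2 * (p + q - 2 * r)^2 = (p - r)^2 + (q - r)^2) \<longleftrightarrow>
        complex_of_real 1 / 2 * (p + q - 2 * r)^2 - ((p - r)^2 + (q - r)^2) = 0" by (rule eq_iff_diff_eq_0)
  also have "\<dots> \<longleftrightarrow> (p - q)^2 = 0" unfolding d by simp
  also have "\<dots> \<longleftrightarrow> p = q" by simp
  finally show ?thesis .
qed

lemma eq2_iff:
  fixes p q r :: complex
  shows "(complex_of_real 2 / 2 * (p + q - 2 * r)^2 = (p - r)^2 + (q - r)^2) \<longleftrightarrow> p = r \<or> q = r"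
proof -
  have d: "complex_of_real 2 / 2 * (p + q - 2 * r)^2 - ((p - r)^2 + (q - r)^2) = 2 * ((p - r) * (q - r))"
    by (simp add: power2_eq_square field_simps)
  have "(complex_of_real 2 / 2 * (p + q - 2 * r)^2 = (p - r)^2 + (q - r)^2) \<longleftrightarrow>
        complex_of_real 2 / 2 * (p + q - 2 * r)^2 - ((p - r)^2 + (q - r)^2) = 0" by (rule eq_iff_diff_eq_0)
  also have "\<dots> \<longleftrightarrow> (p - r) * (q - r) = 0" unfolding d by simp
  also have "\<dots> \<longleftrightarrow> p = r \<or> q = r" by simp
  finally show ?thesis .
qed

lemma reg1_iff: "regular_cyclic N 1 x \<longleftrightarrow> (\<forall>k<N. x ((k + N - 1) mod N) = x ((k + 1) mod N))"
  unfolding regular_cyclic_def eq1_iff ..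

lemma reg2_iff: "regular_cyclic N 2 x \<longleftrightarrow> (\<forall>k<N. x ((k + N - 1) mod N) = x k \<or> x ((k + 1) mod N) = x k)"
  unfolding regular_cyclic_def eq2_iff ..

lemma even_mod_even: "even (N::nat) \<Longrightarrow> even (a mod N) \<longleftrightarrow> even a"
proof -
  assume N: "even N"
  have "a = a mod N + N * (a div N)" by simp
  then show ?thesis using N by (metis even_add even_mult_iff)
qed

lemma part4:
  fixes x :: "nat \<Rightarrow> complex"
  assumes N3: "3 \<le> N"
  shows "(regular_cyclic N 1 x \<and> real_cyclic N x \<and> nonconstant_cyclic N x) \<longleftrightarrow>
        (even N \<and> (\<exists>c \<mu>. c \<noteq> 0 \<and> (\<forall>k<N. c * x k + \<mu> = (if even k then 0 else 1))))"
proof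
  assume H: "regular_cyclic N 1 x \<and> real_cyclic N x \<and> nonconstant_cyclic N x"
  have N0: "0 < N" using N3 by simp
  have P: "\<forall>k<N. x ((k + N - 1) mod N) = x ((k + 1) mod N)" using H reg1_iff by blast
  have step: "x ((j + 2) mod N) = x (j mod N)" for j
  proof -
    define k where "k = (j + 1) mod N"
    have k: "k < N" using N0 by (simp add: k_def)
    have "(k + N - 1) mod N = j mod N" using mod_pred[of "j+1" N] N0 by (simp add: k_def)
    moreover have "(k + 1) mod N = (j + 2) mod N" by (simp add: k_def mod_Suc_eq)
    ultimately show ?thesis using P k by metis
  qed
  have stept: "x ((j + 2 * t) mod N) = x (j mod N)" for j t
  proof (induction t)
    case 0 then show ?case by simp
  next
    case (Suc t)
    have "x ((j + 2 * Suc t) mod N) = x ((j + 2 * t + 2) mod N)" by (simp add: algebra_simps)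
    also have "\<dots> = x ((j + 2 * t) mod N)" by (rule step)
    finally show ?case using Suc.IH by simp
  qed
  have const_contra: False if c: "\<forall>k<N. x k = x 0"
    using H c unfolding nonconstant_cyclic_def by metis
  have evN: "even N"
  proof (rule ccontr)
    assume odd: "\<not> even N"
    have s1: "x ((j + 1) mod N) = x (j mod N)" for j
    proof -
      have eq: "j + 2 * ((N + 1) div 2) = (j + 1) + N" using odd by (simp add: odd_two_times_div_two_succ)
      have "(j + 2 * ((N + 1) div 2)) mod N = (j + 1) mod N" unfolding eq by (rule mod_add_self2)
      then show ?thesis using stept[of j "(N + 1) div 2"] by simp
    qed
    have "k < N \<longrightarrow> x k = x 0" for k
    proof (induction k)
      case 0 then show ?case by simp
    next
      case (Suc k)
      show ?case
      proof
        assume k: "Suc k < N"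
        then have "Suc k mod N = Suc k" "k mod N = k" by auto
        then show "x (Suc k) = x 0" using s1[of k] Suc k by simp
      qed
    qed
    then show False using const_contra by blast
  qed
  have xk: "x k = x (k mod 2)" if "k < N" for k
  proof -
    have "x ((k mod 2 + 2 * (k div 2)) mod N) = x ((k mod 2) mod N)" by (rule stept)
    moreover have "k mod 2 + 2 * (k div 2) = k" by simp
    moreover have "k mod 2 < 2" by simp
    hence "k mod 2 < N" using N3 by linarith
    ultimately show ?thesis using that by simp
  qed
  have x01: "x 1 \<noteq> x 0"
  proof
    assume "x 1 = x 0"
    then have "\<forall>k<N. x k = x 0" using xk by (metis mod2_eq_if)
    then show False using const_contra by blast
  qed
  define c where "c = 1 / (x 1 - x 0)"
  define \<mu> where "\<mu> = - x 0 / (x 1 - x 0)"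
  have "c \<noteq> 0" using x01 by (simp add: c_def)
  moreover have "\<forall>k<N. c * x k + \<mu> = (if even k then 0 else 1)"
  proof (intro allI impI)
    fix k assume "k < N"
    then have "x k = x (k mod 2)" by (rule xk)
    have d: "x 1 - x 0 \<noteq> 0" using x01 by simp
    have "c * x k + \<mu> = (x k - x 0) / (x 1 - x 0)" by (simp add: c_def \<mu>_def diff_divide_distrib)
    then show "c * x k + \<mu> = (if even k then 0 else 1)" using d \<open>x k = x (k mod 2)\<close>
      by (cases "even k") (auto simp: mod2_eq_if)
  qed
  ultimately show "even N \<and> (\<exists>c \<mu>. c \<noteq> 0 \<and> (\<forall>k<N. c * x k + \<mu> = (if even k then 0 else 1)))"
    using evN by blast
next
  assume "even N \<and> (\<exists>c \<mu>. c \<noteq> 0 \<and> (\<forall>k<N. c * x k + \<mu> = (if even k then 0 else 1)))"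
  then obtain c \<mu> where evN: "even N" and c: "c \<noteq> 0" and h: "\<forall>k<N. c * x k + \<mu> = (if even k then 0 else 1)"
    by blast
  have N0: "0 < N" using N3 by simp
  have xv: "x k = ((if even k then 0 else 1) - \<mu>) / c" if "k < N" for k
  proof -
    have "c * x k = (if even k then 0 else 1) - \<mu>" using h that by (simp add: eq_diff_eq)
    then show ?thesis using c by (simp add: eq_divide_eq mult.commute)
  qed
  have reg: "regular_cyclic N 1 x"
    unfolding reg1_iff
  proof (intro allI impI)
    fix k assume k: "k < N"
    have p1: "even ((k + N - 1) mod N) \<longleftrightarrow> even (k + 1)"
    proof -
      have eq: "k + N - 1 = (k + 1) + (N - 2)" using N3 by simp
      have ev2: "even (N - 2)" using evN N3 by simp
      have "even ((k + N - 1) mod N) \<longleftrightarrow> even (k + N - 1)" by (rule even_mod_even[OF evN])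
      also have "\<dots> \<longleftrightarrow> even (k + 1)" unfolding eq even_add using ev2 by simp
      finally show ?thesis .
    qed
    have p2: "even ((k + 1) mod N) \<longleftrightarrow> even (k + 1)" using even_mod_even[OF evN] by simp
    have "(k + N - 1) mod N < N" "(k + 1) mod N < N" using N0 by auto
    then show "x ((k + N - 1) mod N) = x ((k + 1) mod N)"
      using xv[of "(k + N - 1) mod N"] xv[of "(k + 1) mod N"] p1 p2 by presburger
  qed
  have rc: "real_cyclic N x"
    unfolding real_cyclic_def using c h by (intro exI[of _ c] exI[of _ \<mu>]) auto
  have "c * x 0 + \<mu> = 0" "c * x 1 + \<mu> = 1" using h N3 by auto
  then have "x 0 \<noteq> x 1" by auto
  then have nc: "nonconstant_cyclic N x" unfolding nonconstant_cyclic_def using N3 by (intro exI[of _ 0]) (auto intro!: exI[of _ 1])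
  show "regular_cyclic N 1 x \<and> real_cyclic N x \<and> nonconstant_cyclic N x" using reg rc nc by blast
qed



definition lprop :: "nat \<Rightarrow> (nat \<Rightarrow> complex) \<Rightarrow> bool" where
  "lprop M v \<longleftrightarrow> (\<forall>i<M. (0 < i \<and> v (i - 1) = v i) \<or> (Suc i < M \<and> v (Suc i) = v i))"

definition goodQ :: "nat \<Rightarrow> (nat \<Rightarrow> complex) \<Rightarrow> nat set set \<Rightarrow> bool" where
  "goodQ M v Q \<longleftrightarrow> partition_on {..<M} Q \<and>
     (\<forall>A\<in>Q. \<exists>lo hi. A = {lo..<hi} \<and> lo + 2 \<le> hi \<and> hi \<le> M \<and> (\<forall>i\<in>A. \<forall>j\<in>A. v i = v j))"

lemma goodQ_ext:
  assumes Q: "goodQ M' v Q" and M: "M' + 2 \<le> M" and c: "\<forall>i\<in>{M'..<M}. v i = v M'"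
  shows "goodQ M v (insert {M'..<M} Q)"
proof -
  have pQ: "partition_on {..<M'} Q" using Q unfolding goodQ_def by blast
  have U: "\<Union>Q = {..<M'}" using partition_onD1[OF pQ] by simp
  have dj: "disjnt {M'..<M} (\<Union>Q)" unfolding U by (auto simp: disjnt_def)
  have e: "{..<M} - {M'..<M} = {..<M'}" using M by auto
  have s: "{M'..<M} \<subseteq> {..<M}" by auto
  have ne: "{M'..<M} \<noteq> {}" using M by simp
  have pp: "partition_on ({..<M} - {M'..<M}) Q \<and> {M'..<M} \<subseteq> {..<M} \<and> {M'..<M} \<noteq> {}"
  proof -
    have "partition_on ({..<M} - {M'..<M}) Q" using pQ by (simp only: e)
    then show ?thesis using s ne by (intro conjI)
  qed
  have iff: "partition_on {..<M} (insert {M'..<M} Q) \<longleftrightarrow> partition_on ({..<M} - {M'..<M}) Q \<and> {M'..<M} \<subseteq> {..<M} \<and> {M'..<M} \<noteq> {}"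
    by (rule partition_on_insert[OF dj])
  have "partition_on {..<M} (insert {M'..<M} Q)"
    by (rule iffD2[OF iff pp])
  moreover have "\<forall>A\<in>insert {M'..<M} Q. \<exists>lo hi. A = {lo..<hi} \<and> lo + 2 \<le> hi \<and> hi \<le> M \<and> (\<forall>i\<in>A. \<forall>j\<in>A. v i = v j)"
  proof
    fix A assume "A \<in> insert {M'..<M} Q"
    then show "\<exists>lo hi. A = {lo..<hi} \<and> lo + 2 \<le> hi \<and> hi \<le> M \<and> (\<forall>i\<in>A. \<forall>j\<in>A. v i = v j)"
    proof (rule insertE)
      assume A: "A = {M'..<M}"
      have "\<forall>i\<in>A. \<forall>j\<in>A. v i = v j"
      proof (intro ballI)
        fix i j assume "i \<in> A" "j \<in> A"
        then have "v i = v M'" "v j = v M'" using c unfolding A by blast+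
        then show "v i = v j" by simp
      qed
      moreover have "M' + 2 \<le> M" "M \<le> M" using M by auto
      ultimately show ?thesis using A by blast
    next
      assume "A \<in> Q"
      then obtain lo hi where "A = {lo..<hi}" "lo + 2 \<le> hi" "hi \<le> M'" "\<forall>i\<in>A. \<forall>j\<in>A. v i = v j"
        using Q unfolding goodQ_def by blast
      moreover have "hi \<le> M" using \<open>hi \<le> M'\<close> M by simp
      ultimately show ?thesis by blast
    qed
  qed
  ultimately show ?thesis unfolding goodQ_def by blast
qed

lemma lin_blocks: "lprop M v \<Longrightarrow> \<exists>Q. goodQ M v Q"
proof (induction M rule: less_induct)
  case (less M)
  show ?case
  proof (cases "M < 2")
    case True
    show ?thesis
    proof (cases "M = 0")
      case True
      then show ?thesis unfolding goodQ_def by (intro exI[of _ "{}"]) (simp add: partition_on_empty)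
    next
      case False
      then have "M = 1" using True by simp
      then show ?thesis using less.prems unfolding lprop_def by auto
    qed
  next
    case False
    then have M2: "2 \<le> M" by simp
    have "(0 < M - 1 \<and> v (M - 1 - 1) = v (M - 1)) \<or> (Suc (M - 1) < M \<and> v (Suc (M - 1)) = v (M - 1))"
    proof -
      have "M - 1 < M" using M2 by simp
      then show ?thesis using less.prems unfolding lprop_def by blast
    qed
    then have last: "v (M - 2) = v (M - 1)" using M2 by (auto simp: numeral_2_eq_2)
    show ?thesis
    proof (cases "lprop (M - 2) v")
      case True
      obtain Q where q: "goodQ (M - 2) v Q" using less.IH[of "M - 2"] True M2 by auto
      have cc: "\<forall>i\<in>{M - 2..<M}. v i = v (M - 2)"
      proof
        fix i assume "i \<in> {M - 2..<M}"
        then have "i = M - 2 \<or> i = M - 1" by auto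
        then show "v i = v (M - 2)" using last by auto
      qed
      have "M - 2 + 2 \<le> M" using M2 by simp
      from goodQ_ext[OF q this cc] have "goodQ M v (insert {M - 2..<M} Q)" .
      then show ?thesis by blast
    next
      case False
      then obtain i where i: "i < M - 2" and ni: "\<not> ((0 < i \<and> v (i - 1) = v i) \<or> (Suc i < M - 2 \<and> v (Suc i) = v i))"
        unfolding lprop_def by blast
      have "(0 < i \<and> v (i - 1) = v i) \<or> (Suc i < M \<and> v (Suc i) = v i)" using less.prems i unfolding lprop_def by auto
      then have r: "v (Suc i) = v i" using ni by blast
      with ni have iM: "i = M - 3" using i by auto
      have M3: "3 \<le> M" using i iM by simp
      have nl: "\<not> (0 < M - 3 \<and> v (M - 4) = v (M - 3))" using ni iM by (simp add: numeral_eq_Suc)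
      have l3: "lprop (M - 3) v"
        unfolding lprop_def
      proof (intro allI impI)
        fix j assume j: "j < M - 3"
        have disj: "(0 < j \<and> v (j - 1) = v j) \<or> (Suc j < M \<and> v (Suc j) = v j)" using less.prems j unfolding lprop_def by auto
        show "(0 < j \<and> v (j - 1) = v j) \<or> (Suc j < M - 3 \<and> v (Suc j) = v j)"
        proof (cases "0 < j \<and> v (j - 1) = v j")
          case True then show ?thesis by blast
        next
          case False
          then have rj: "v (Suc j) = v j" using disj by blast
          show ?thesis
          proof (cases "Suc j < M - 3")
            case True then show ?thesis using rj by blast
          next
            case False
            then have sj: "Suc j = M - 3" "j = M - 4" using j by auto
            have "0 < M - 3" using j by simp
            moreover have "v (M - 4) = v (M - 3)" using rj sj by simp
            ultimately show ?thesis using nl by blast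
          qed
        qed
      qed
      obtain Q where q: "goodQ (M - 3) v Q" using less.IH[of "M - 3"] l3 M3 by auto
      have cc: "\<forall>k\<in>{M - 3..<M}. v k = v (M - 3)"
      proof
        fix k assume "k \<in> {M - 3..<M}"
        then have "k = M - 3 \<or> k = M - 2 \<or> k = M - 1" by auto
        moreover have "Suc (M - 3) = M - 2" using M3 by simp
        hence "v (M - 2) = v (M - 3)" using r iM by simp
        ultimately show "v k = v (M - 3)" using last by auto
      qed
      have "M - 3 + 2 \<le> M" using M3 by simp
      from goodQ_ext[OF q this cc] have "goodQ M v (insert {M - 3..<M} Q)" .
      then show ?thesis by blast
    qed
  qed
qed



lemma cyc_full: "0 < N \<Longrightarrow> cyc_arc N 0 N = {..<N}"
  unfolding cyc_arc_def
proof (intro set_eqI iffI)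
  fix a assume "a \<in> {(0 + i) mod N |i. i < N}" "0 < N"
  then show "a \<in> {..<N}" by auto
next
  fix a assume "a \<in> {..<N}"
  then have "a = (0 + a) mod N \<and> a < N" by simp
  then show "a \<in> {(0 + i) mod N |i. i < N}" by blast
qed

lemma part3_rev:
  fixes x :: "nat \<Rightarrow> complex"
  assumes N3: "3 \<le> N" and cs: "constant_segments N x"
  shows "regular_cyclic N 2 x"
  unfolding reg2_iff
proof (intro allI impI)
  fix k assume k: "k < N"
  have N0: "0 < N" using N3 by simp
  obtain P where P: "partition_on {..<N} P"
    and PA: "\<forall>A\<in>P. (\<exists>s L. s < N \<and> 2 \<le> L \<and> L \<le> N \<and> A = cyc_arc N s L) \<and> (\<forall>i\<in>A. \<forall>j\<in>A. x i = x j)"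
    using cs unfolding constant_segments_def by blast
  have UP: "\<Union>P = {..<N}" using partition_onD1[OF P] by simp
  have "k \<in> \<Union>P" unfolding UP using k by simp
  then obtain A where A: "A \<in> P" "k \<in> A" by blast
  have PA1: "\<exists>s L. s < N \<and> 2 \<le> L \<and> L \<le> N \<and> A = cyc_arc N s L" and PA2: "\<forall>i\<in>A. \<forall>j\<in>A. x i = x j"
    using PA A(1) by blast+
  obtain s L where sL: "s < N" "2 \<le> L" "L \<le> N" "A = cyc_arc N s L" using PA1 by blast
  have const: "x i = x j" if "i \<in> A" "j \<in> A" for i j using PA2 that by blast
  have "k \<in> cyc_arc N s L" using A(2) sL(4) by simp
  then obtain i where i: "i < L" "k = (s + i) mod N" unfolding cyc_arc_def by blast
  show "x ((k + N - 1) mod N) = x k \<or> x ((k + 1) mod N) = x k"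
  proof (cases "Suc i < L")
    case True
    have "(s + Suc i) mod N \<in> A" using True sL(4) unfolding cyc_arc_def by blast
    moreover have "(k + 1) mod N = (s + Suc i) mod N" using i(2) by (simp add: mod_Suc_eq)
    ultimately have "x ((k + 1) mod N) = x k" using const A(2) by metis
    then show ?thesis by blast
  next
    case False
    then have i1: "1 \<le> i" using i(1) sL(2) by linarith
    have "(s + (i - 1)) mod N \<in> A" using i(1) sL(4) unfolding cyc_arc_def by force
    moreover have "(k + N - 1) mod N = (s + (i - 1)) mod N"
    proof -
      have "(s + i - 1) mod N = ((s + i) mod N + N - 1) mod N" using mod_pred[of "s + i" N] i1 N0 by simp
      moreover have "s + i - 1 = s + (i - 1)" using i1 by simp
      ultimately show ?thesis using i(2) by simp
    qed
    ultimately have "x ((k + N - 1) mod N) = x k" using const A(2) by metis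
    then show ?thesis by blast
  qed
qed

lemma part3_fwd:
  fixes x :: "nat \<Rightarrow> complex"
  assumes N3: "3 \<le> N" and reg: "regular_cyclic N 2 x"
  shows "constant_segments N x"
proof -
  have N0: "0 < N" using N3 by simp
  have R: "x ((k + N - 1) mod N) = x k \<or> x ((k + 1) mod N) = x k" if "k < N" for k
    using reg that unfolding reg2_iff by blast
  show ?thesis
  proof (cases "\<forall>k<N. x ((k + 1) mod N) = x k")
    case True
    have all: "k < N \<longrightarrow> x k = x 0" for k
    proof (induction k)
      case 0 then show ?case by simp
    next
      case (Suc k)
      show ?case
      proof
        assume k: "Suc k < N"
        then have kN: "k < N" by simp
        have "x ((k + 1) mod N) = x k" using True kN by blast
        moreover have "(k + 1) mod N = Suc k" using k by simp
        ultimately show "x (Suc k) = x 0" using Suc k by simp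
      qed
    qed
    have "partition_on {..<N} {{..<N}}" using N0 by (intro partition_on_space) auto
    moreover have "\<forall>A\<in>{{..<N}}. (\<exists>s L. s < N \<and> 2 \<le> L \<and> L \<le> N \<and> A = cyc_arc N s L) \<and> (\<forall>i\<in>A. \<forall>j\<in>A. x i = x j)"
    proof
      fix A assume "A \<in> {{..<N}}"
      then have A: "A = {..<N}" by simp
      have "0 < N \<and> 2 \<le> N \<and> N \<le> N \<and> A = cyc_arc N 0 N" using N3 A cyc_full[OF N0] by simp
      moreover have "\<forall>i\<in>A. \<forall>j\<in>A. x i = x j"
      proof (intro ballI)
        fix i j assume "i \<in> A" "j \<in> A"
        then have "i < N" "j < N" using A by auto
        then have "x i = x 0" "x j = x 0" using all[of i] all[of j] by blast+
        then show "x i = x j" by simp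
      qed
      ultimately show "(\<exists>s L. s < N \<and> 2 \<le> L \<and> L \<le> N \<and> A = cyc_arc N s L) \<and> (\<forall>i\<in>A. \<forall>j\<in>A. x i = x j)"
        by blast
    qed
    ultimately show ?thesis unfolding constant_segments_def by blast
  next
    case False
    then obtain b where b: "b < N" "x ((b + 1) mod N) \<noteq> x b" by blast
    define \<sigma> where "\<sigma> i = (b + 1 + i) mod N" for i
    define v where "v i = x (\<sigma> i)" for i
    have \<sigma>N: "\<sigma> i < N" for i using N0 by (simp add: \<sigma>_def)
    have lp: "lprop N v"
      unfolding lprop_def
    proof (intro allI impI)
      fix i assume iN: "i < N"
      define k where "k = \<sigma> i"
      have left: "(k + N - 1) mod N = (b + i) mod N"
      proof -
        have "(b + 1 + i - 1) mod N = ((b + 1 + i) mod N + N - 1) mod N" using mod_pred[of "b + 1 + i" N] N0 by simp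
        then show ?thesis by (simp add: k_def \<sigma>_def)
      qed
      have right: "(k + 1) mod N = (b + 1 + Suc i) mod N" by (simp add: k_def \<sigma>_def mod_Suc_eq)
      from R[OF \<sigma>N[of i]] have "x (\<sigma> i) = x ((b + i) mod N) \<or> x (\<sigma> i) = x ((b + 1 + Suc i) mod N)"
        using left right unfolding k_def by metis
      then show "(0 < i \<and> v (i - 1) = v i) \<or> (Suc i < N \<and> v (Suc i) = v i)"
      proof
        assume h: "x (\<sigma> i) = x ((b + i) mod N)"
        show ?thesis
        proof (cases "i = 0")
          case True
          then have "x ((b + 1) mod N) = x b" using h b(1) by (simp add: \<sigma>_def)
          then show ?thesis using b(2) by blast
        next
          case False
          then have "\<sigma> (i - 1) = (b + i) mod N" by (simp add: \<sigma>_def)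
          then have "v (i - 1) = v i" using h by (simp add: v_def)
          then show ?thesis using False by blast
        qed
      next
        assume h: "x (\<sigma> i) = x ((b + 1 + Suc i) mod N)"
        show ?thesis
        proof (cases "Suc i < N")
          case True
          have "v (Suc i) = v i" using h by (simp add: v_def \<sigma>_def)
          then show ?thesis using True by blast
        next
          case False
          then have iN1: "i = N - 1" using iN by simp
          have "\<sigma> i = b"
          proof -
            have e: "b + 1 + i = b + N" using iN1 N0 by simp
            have "\<sigma> i = (b + N) mod N" unfolding \<sigma>_def e ..
            also have "\<dots> = b" using b(1) by simp
            finally show ?thesis .
          qed
          moreover have "(b + 1 + Suc i) mod N = (b + 1) mod N"
          proof -
            have e: "b + 1 + Suc i = (b + 1) + N" using iN1 N0 by simp
            show ?thesis unfolding e by (rule mod_add_self2)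
          qed
          ultimately have "x ((b + 1) mod N) = x b" using h by simp
          then show ?thesis using b(2) by blast
        qed
      qed
    qed
    obtain Q where Q: "goodQ N v Q" using lin_blocks[OF lp] by blast
    have pQ: "partition_on {..<N} Q" and QA: "\<forall>A\<in>Q. \<exists>lo hi. A = {lo..<hi} \<and> lo + 2 \<le> hi \<and> hi \<le> N \<and> (\<forall>i\<in>A. \<forall>j\<in>A. v i = v j)"
      using Q unfolding goodQ_def by blast+
    have inj: "inj_on \<sigma> {..<N}"
    proof (rule inj_onI)
      fix p q assume pq: "p \<in> {..<N}" "q \<in> {..<N}" "\<sigma> p = \<sigma> q"
      then have "((b + 1) + p) mod N = ((b + 1) + q) mod N" by (simp add: \<sigma>_def)
      then have "p mod N = q mod N" by (simp add: nat_mod_eq_iff)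
      then show "p = q" using pq by simp
    qed
    have img: "\<sigma> ` {..<N} = {..<N}"
      by (rule endo_inj_surj) (use inj \<sigma>N in auto)
    define P where "P = (`) \<sigma> ` Q - {{}}"
    have pP: "partition_on {..<N} P"
      using partition_on_inj_image[OF pQ inj] unfolding P_def img .
    have "\<forall>A\<in>P. (\<exists>s L. s < N \<and> 2 \<le> L \<and> L \<le> N \<and> A = cyc_arc N s L) \<and> (\<forall>i\<in>A. \<forall>j\<in>A. x i = x j)"
    proof
      fix A assume "A \<in> P"
      then obtain B where B: "B \<in> Q" "A = \<sigma> ` B" unfolding P_def by blast
      then obtain lo hi where lh: "B = {lo..<hi}" "lo + 2 \<le> hi" "hi \<le> N" and cB: "\<forall>i\<in>B. \<forall>j\<in>B. v i = v j"
        using QA by blast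
      define s where "s = (b + 1 + lo) mod N"
      have arc: "A = cyc_arc N s (hi - lo)"
      proof
        show "A \<subseteq> cyc_arc N s (hi - lo)"
        proof
          fix a assume "a \<in> A"
          then obtain j where j: "j \<in> B" "a = \<sigma> j" using B by blast
          then have "lo \<le> j" "j < hi" using lh by auto
          then have lj: "j - lo < hi - lo" "b + 1 + lo + (j - lo) = b + 1 + j" by auto
          have "(s + (j - lo)) mod N = (b + 1 + lo + (j - lo)) mod N" unfolding s_def by (rule mod_add_left_eq)
          also have "\<dots> = a" unfolding lj(2) using j(2) by (simp add: \<sigma>_def)
          finally have "a = (s + (j - lo)) mod N" "j - lo < hi - lo" using lj by auto
          then show "a \<in> cyc_arc N s (hi - lo)" unfolding cyc_arc_def by blast
        qed
      next
        show "cyc_arc N s (hi - lo) \<subseteq> A"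
        proof
          fix a assume "a \<in> cyc_arc N s (hi - lo)"
          then obtain t where t: "t < hi - lo" "a = (s + t) mod N" unfolding cyc_arc_def by blast
          then have "lo + t \<in> B" using lh by auto
          moreover have "a = \<sigma> (lo + t)" using t by (simp add: s_def \<sigma>_def mod_add_left_eq add.assoc)
          ultimately show "a \<in> A" using B by blast
        qed
      qed
      have "s < N" using N0 by (simp add: s_def)
      moreover have "2 \<le> hi - lo" "hi - lo \<le> N" using lh by auto
      moreover have "\<forall>i\<in>A. \<forall>j\<in>A. x i = x j"
      proof (intro ballI)
        fix i j assume "i \<in> A" "j \<in> A"
        then obtain i' j' where "i' \<in> B" "j' \<in> B" "i = \<sigma> i'" "j = \<sigma> j'" using B by blast
        then show "x i = x j" using cB unfolding v_def by blast
      qed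
      ultimately show "(\<exists>s L. s < N \<and> 2 \<le> L \<and> L \<le> N \<and> A = cyc_arc N s L) \<and> (\<forall>i\<in>A. \<forall>j\<in>A. x i = x j)"
        using arc by blast
    qed
    then show ?thesis unfolding constant_segments_def using pP by blast
  qed
qed

theorem theorem3p1:
  shows
   "(\<forall>(n::nat) (a::nat \<Rightarrow> nat) (y::real).
       (\<forall>k\<le>n. 0 < a k) \<longrightarrow> (y + 1) * (\<Sum>k\<le>n. real (a k) * y ^ k) = 0 \<longrightarrow>
       (let N = 2 * (\<Sum>k\<le>n. a k); \<gamma> = 2 * (1 + y^2) / (1 - y)^2 in
          (\<exists>e. admissible_exps a n N e) \<and>
          (\<forall>e x0. admissible_exps a n N e \<longrightarrow>
              constructed_seq x0 y e N = constructed_seq x0 y e 0 \<and>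
              regular_cyclic N \<gamma> (constructed_seq x0 y e) \<and>
              real_cyclic N (constructed_seq x0 y e))))
    \<and>
    (\<forall>(N::nat) (\<gamma>::real) (x::nat \<Rightarrow> complex).
       3 \<le> N \<longrightarrow> \<gamma> \<noteq> 1 \<longrightarrow> \<gamma> \<noteq> 2 \<longrightarrow>
       regular_cyclic N \<gamma> x \<longrightarrow> real_cyclic N x \<longrightarrow> nonconstant_cyclic N x \<longrightarrow>
       (\<exists>(n::nat) (a::nat \<Rightarrow> nat) (y::real) e (c::complex) (\<mu>::complex) s x0.
          (\<forall>k\<le>n. 0 < a k) \<and> (y + 1) * (\<Sum>k\<le>n. real (a k) * y ^ k) = 0 \<and>
          N = 2 * (\<Sum>k\<le>n. a k) \<and> \<gamma> = 2 * (1 + y^2) / (1 - y)^2 \<and>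
          admissible_exps a n N e \<and> c \<noteq> 0 \<and> s < N \<and>
          (\<forall>k<N. c * x ((k + s) mod N) + \<mu> = constructed_seq x0 y e k)))
    \<and>
    (\<forall>(N::nat) (x::nat \<Rightarrow> complex). 3 \<le> N \<longrightarrow>
       (regular_cyclic N 2 x \<longleftrightarrow> constant_segments N x))
    \<and>
    (\<forall>(N::nat) (x::nat \<Rightarrow> complex). 3 \<le> N \<longrightarrow>
       ((regular_cyclic N 1 x \<and> real_cyclic N x \<and> nonconstant_cyclic N x) \<longleftrightarrow>
        (even N \<and> (\<exists>c \<mu>. c \<noteq> 0 \<and> (\<forall>k<N. c * x k + \<mu> = (if even k then 0 else 1))))))"
  proof (intro conjI allI impI)
  fix n :: nat and a :: "nat \<Rightarrow> nat" and y :: real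
  assume pos: "\<forall>k\<le>n. 0 < a k" and root: "(y + 1) * (\<Sum>k\<le>n. real (a k) * y ^ k) = 0"
  show "let N = 2 * (\<Sum>k\<le>n. a k); \<gamma> = 2 * (1 + y^2) / (1 - y)^2 in
          (\<exists>e. admissible_exps a n N e) \<and>
          (\<forall>e x0. admissible_exps a n N e \<longrightarrow>
              constructed_seq x0 y e N = constructed_seq x0 y e 0 \<and>
              regular_cyclic N \<gamma> (constructed_seq x0 y e) \<and>
              real_cyclic N (constructed_seq x0 y e))"
    unfolding Let_def using exists_adm[OF pos] part1_seq[OF pos root] by blast
next
  fix N :: nat and \<gamma> :: real and x :: "nat \<Rightarrow> complex"
  assume "3 \<le> N" "\<gamma> \<noteq> 1" "\<gamma> \<noteq> 2" "regular_cyclic N \<gamma> x" "real_cyclic N x" "nonconstant_cyclic N x"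
  then show "\<exists>(n::nat) (a::nat \<Rightarrow> nat) (y::real) e (c::complex) (\<mu>::complex) s x0.
          (\<forall>k\<le>n. 0 < a k) \<and> (y + 1) * (\<Sum>k\<le>n. real (a k) * y ^ k) = 0 \<and>
          N = 2 * (\<Sum>k\<le>n. a k) \<and> \<gamma> = 2 * (1 + y^2) / (1 - y)^2 \<and>
          admissible_exps a n N e \<and> c \<noteq> 0 \<and> s < N \<and>
          (\<forall>k<N. c * x ((k + s) mod N) + \<mu> = constructed_seq x0 y e k)"
    by (rule part2)
next
  fix N :: nat and x :: "nat \<Rightarrow> complex"
  assume "3 \<le> N"
  then show "regular_cyclic N 2 x \<longleftrightarrow> constant_segments N x"
    using part3_fwd part3_rev by blast
next
  fix N :: nat and x :: "nat \<Rightarrow> complex"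
  assume "3 \<le> N"
  then show "(regular_cyclic N 1 x \<and> real_cyclic N x \<and> nonconstant_cyclic N x) \<longleftrightarrow>
        (even N \<and> (\<exists>c \<mu>. c \<noteq> 0 \<and> (\<forall>k<N. c * x k + \<mu> = (if even k then 0 else 1))))"
    by (rule part4)
qed

end
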